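(* For every $\ell\ge1$, $E_\ell$ is a closed subset of $\mathcal M_F(\mathcal I\times\mathbb R^\ell)$ for the topology of weak convergence of measures.
   Context: $\mathcal I=\{\varnothing\}\cup\bigcup_{n\ge1}\mathbb N^n$ is the set of finite words over $\mathbb N=\{0,1,\dots\}$ with concatenation $ij$; $j\prec i$ iff $i=j\ell$ for some nonempty word $\ell$. $\mathcal I\times\mathbb R^\ell$ carries the metric $d((i,x),(j,y))=d^{\mathcal I}(i,j)+|x-y|$, where for $i=i_1\cdots i_n$, $j=j_1\cdots j_m$ with longest common prefix of length $p$, $d^{\mathcal I}(i,j)=\sum_{k=p+1}^n(i_k+1)+\sum_{k=p+1}^m(j_k+1)$ (so $\mathcal I$ is discrete). $\mathcal M_F(\mathcal I\times\mathbb R^\ell)$ is the set of finite measures on $\mathcal I\times\mathbb R^\ell$ with the weak topology ($\nu_n\to\nu$ iff $\int fd\nu_n\to\int fd\nu$ for all bounded continuous $f$). $E_\ell$ is the set of measures $\sum_{i\in V}\delta_{(i,x_i)}$ with $V\subset\mathcal I$ finite, $x_i\in\mathbb R^\ell$, and no $i,j\in V$ with $i\prec j$. *)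

theory Defs
  imports "HOL-Analysis.Analysis"
begin

definition word_prec :: "nat list \<Rightarrow> nat list \<Rightarrow> bool" where
  "word_prec j i \<longleftrightarrow> (\<exists>l. l \<noteq> [] \<and> i = j @ l)"

fun lcp_len :: "nat list \<Rightarrow> nat list \<Rightarrow> nat" where
  "lcp_len (a # as) (b # bs) = (if a = b then Suc (lcp_len as bs) else 0)"
| "lcp_len _ _ = 0"

definition dI :: "nat list \<Rightarrow> nat list \<Rightarrow> real" where
  "dI i j = real (sum_list (map Suc (drop (lcp_len i j) i))
                 + sum_list (map Suc (drop (lcp_len i j) j)))"

definition dIR :: "nat list \<times> (real ^ 'n) \<Rightarrow> nat list \<times> (real ^ 'n) \<Rightarrow> real" where
  "dIR p q = dI (fst p) (fst q) + norm (snd p - snd q)"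

definition bcont :: "(nat list \<times> (real ^ 'n) \<Rightarrow> real) \<Rightarrow> bool" where
  "bcont f \<longleftrightarrow> (\<exists>B. \<forall>p. \<bar>f p\<bar> \<le> B) \<and>
     (\<forall>p. \<forall>e>0. \<exists>d>0. \<forall>q. dIR p q < d \<longrightarrow> \<bar>f q - f p\<bar> < e)"

text \<open>The Borel sigma-algebra of I x R^l (I countable discrete).\<close>
definition IRspace :: "(nat list \<times> (real ^ 'n)) measure" where
  "IRspace = count_space UNIV \<Otimes>\<^sub>M borel"

definition MF :: "(nat list \<times> (real ^ 'n)) measure set" where
  "MF = {\<nu>. sets \<nu> = sets (IRspace :: (nat list \<times> (real ^ 'n)) measure) \<and> finite_measure \<nu>}"

definition weak_top :: "(nat list \<times> (real ^ 'n)) measure topology" where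
  "weak_top = topology_generated_by
     {{\<nu> \<in> MF. (\<integral>x. f x \<partial>\<nu>) \<in> U} | f U. bcont f \<and> open U}"

text \<open>E_l: measures sum_{i in V} delta_(i, x_i), V finite antichain for the prefix order.
  The sum of Dirac masses is written out via its values on measurable sets.\<close>
definition E :: "(nat list \<times> (real ^ 'n)) measure set" where
  "E = {\<nu>. \<exists>V x. finite V \<and> (\<forall>i\<in>V. \<forall>j\<in>V. \<not> word_prec i j) \<and>
           sets \<nu> = sets (IRspace :: (nat list \<times> (real ^ 'n)) measure) \<and>
           (\<forall>A \<in> sets \<nu>. emeasure \<nu> A = of_nat (card {i \<in> V. (i, x i) \<in> A}))}"

end

theory Submission
  imports Defs
begin

lemma sum_list_Suc_zero: "sum_list (map Suc xs) = 0 \<longleftrightarrow> xs = []"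
  by (cases xs) auto

lemma lcp_drop_eq: "drop (lcp_len i j) i = [] \<Longrightarrow> drop (lcp_len i j) j = [] \<Longrightarrow> i = j"
  by (induction i j rule: lcp_len.induct) (auto split: if_splits)

lemma dI_less1: "dI i j < 1 \<Longrightarrow> i = j"
  unfolding dI_def using lcp_drop_eq[of i j] sum_list_Suc_zero
  by (metis add_is_0 less_one of_nat_1 of_nat_less_iff)

definition hf :: "nat list set \<Rightarrow> (real ^ 'n \<Rightarrow> real) \<Rightarrow> nat list \<times> (real ^ 'n) \<Rightarrow> real" where
  "hf S g p = indicator (S \<times> UNIV) p * g (snd p)"

lemma bcont_hf:
  fixes g :: "real ^ 'n \<Rightarrow> real"
  assumes g: "continuous_on UNIV g" and B: "\<And>x. \<bar>g x\<bar> \<le> B"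
  shows "bcont (hf S g)"
  unfolding bcont_def
proof (intro conjI allI impI)
  show "\<exists>B. \<forall>p. \<bar>hf S g p\<bar> \<le> B"
    using B by (intro exI[of _ B]) (auto simp: hf_def indicator_def intro: order_trans[OF abs_ge_zero B])
next
  fix p :: "nat list \<times> (real ^ 'n)" and e :: real assume e: "e > 0"
  have "isCont g (snd p)" using g by (simp add: continuous_on_eq_continuous_at)
  then obtain d where d: "d > 0" "\<And>y. dist y (snd p) < d \<Longrightarrow> dist (g y) (g (snd p)) < e"
    using e unfolding continuous_at_eps_delta by blast
  show "\<exists>d>0. \<forall>q. dIR p q < d \<longrightarrow> \<bar>hf S g q - hf S g p\<bar> < e"
  proof (intro exI[of _ "min d 1"] conjI allI impI)
    show "min d 1 > 0" using d by simp
  next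
    fix q assume q: "dIR p q < min d 1"
    have "dI (fst p) (fst q) + norm (snd p - snd q) < d" "dI (fst p) (fst q) + norm (snd p - snd q) < 1"
      using q by (auto simp: dIR_def)
    moreover have "dI (fst p) (fst q) \<ge> 0" "norm (snd p - snd q) \<ge> 0" by (auto simp: dI_def)
    ultimately have "dI (fst p) (fst q) < 1" "norm (snd p - snd q) < d" by linarith+
    hence "fst p = fst q" "dist (snd q) (snd p) < d" using dI_less1 by (auto simp: dist_norm norm_minus_commute)
    then show "\<bar>hf S g q - hf S g p\<bar> < e" using d(2)[of "snd q"] e
      by (auto simp: hf_def indicator_def dist_real_def mem_Times_iff)
  qed
qed

lemma hf_meas [measurable]:
  fixes g :: "real ^ 'n \<Rightarrow> real"
  assumes "continuous_on UNIV g"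
  shows "hf S g \<in> borel_measurable (IRspace :: (nat list \<times> (real ^ 'n)) measure)"
proof -
  have "S \<times> (UNIV :: (real ^ 'n) set) \<in> sets (IRspace :: (nat list \<times> (real ^ 'n)) measure)"
    unfolding IRspace_def by (intro pair_measureI) auto
  moreover have "g \<in> borel_measurable borel" using assms by (rule borel_measurable_continuous_onI)
  ultimately show ?thesis unfolding hf_def[abs_def] IRspace_def
    by (intro borel_measurable_times borel_measurable_indicator) (auto intro: measurable_compose[OF measurable_snd])
qed

lemma space_IR: "space (IRspace :: (nat list \<times> (real ^ 'n)) measure) = UNIV"
  by (simp add: IRspace_def space_pair_measure)

lemma cont_int:
  assumes "bcont f"
  shows "continuous_map (weak_top :: (nat list \<times> (real ^ 'n)) measure topology) euclideanreal (\<lambda>\<nu>. \<integral>x. f x \<partial>\<nu>)"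
proof -
  have top: "topspace (weak_top :: (nat list \<times> (real ^ 'n)) measure topology) = MF"
    unfolding weak_top_def topology_generated_by_topspace
  proof (intro equalityI subsetI)
    fix \<nu> :: "(nat list \<times> (real ^ 'n)) measure" assume "\<nu> \<in> MF"
    moreover have "bcont (\<lambda>_::nat list \<times> (real ^ 'n). 0::real)" unfolding bcont_def by auto
    ultimately show "\<nu> \<in> \<Union> {{\<nu> \<in> MF. (\<integral>x. f x \<partial>\<nu>) \<in> U} | f U. bcont f \<and> open U}"
      by (intro UnionI[of "{\<nu> \<in> MF. (\<integral>x. (\<lambda>_. 0::real) x \<partial>\<nu>) \<in> UNIV}"]) blast+
  qed auto
  show ?thesis unfolding continuous_map_def top
  proof (intro conjI allI impI)
    fix U assume "openin euclideanreal U"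
    hence "open U" by simp
    hence "{\<nu> \<in> MF. (\<integral>x. f x \<partial>\<nu>) \<in> U} \<in> {{\<nu> \<in> MF. (\<integral>x. f x \<partial>\<nu>) \<in> U} | f U. bcont f \<and> open U}"
      using assms by blast
    thus "openin weak_top {\<nu> \<in> MF. (\<integral>x. f x \<partial>\<nu>) \<in> U}"
      unfolding weak_top_def by (rule topology_generated_by_Basis)
  qed auto
qed

lemma E_repr:
  assumes "\<mu> \<in> (E :: (nat list \<times> (real ^ 'n)) measure set)"
  obtains V x where "finite V" "\<forall>i\<in>V. \<forall>j\<in>V. \<not> word_prec i j"
    "\<mu> = distr (count_space V) IRspace (\<lambda>i. (i, x i))"
proof -
  obtain V x where V: "finite V" "\<forall>i\<in>V. \<forall>j\<in>V. \<not> word_prec i j"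
    and s: "sets \<mu> = sets (IRspace :: (nat list \<times> (real ^ 'n)) measure)"
    and m: "\<forall>A \<in> sets \<mu>. emeasure \<mu> A = of_nat (card {i \<in> V. (i, x i) \<in> A})"
    using assms unfolding E_def by blast
  have meas: "(\<lambda>i. (i, x i)) \<in> measurable (count_space V) (IRspace :: (nat list \<times> (real ^ 'n)) measure)"
    by (simp add: space_IR)
  have "\<mu> = distr (count_space V) IRspace (\<lambda>i. (i, x i))"
  proof (rule measure_eqI)
    show "sets \<mu> = sets (distr (count_space V) IRspace (\<lambda>i. (i, x i)))" using s by simp
  next
    fix A assume A: "A \<in> sets \<mu>"
    have "(\<lambda>i. (i, x i)) -` A \<inter> space (count_space V) = {i \<in> V. (i, x i) \<in> A}" by auto
    moreover have "finite {i \<in> V. (i, x i) \<in> A}" using V(1) by simp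
    ultimately show "emeasure \<mu> A = emeasure (distr (count_space V) IRspace (\<lambda>i. (i, x i))) A"
      using A s m meas by (simp add: emeasure_distr emeasure_count_space_finite)
  qed
  then show ?thesis using V that by blast
qed

lemma E_int:
  fixes x :: "nat list \<Rightarrow> real ^ 'n" and f :: "nat list \<times> (real ^ 'n) \<Rightarrow> real"
  assumes "finite V" "f \<in> borel_measurable (IRspace :: (nat list \<times> (real ^ 'n)) measure)"
  shows "(\<integral>p. f p \<partial>distr (count_space V) IRspace (\<lambda>i. (i, x i))) = (\<Sum>i\<in>V. f (i, x i))"
proof -
  have meas: "(\<lambda>i. (i, x i)) \<in> measurable (count_space V) (IRspace :: (nat list \<times> (real ^ 'n)) measure)"
    by (simp add: space_IR)
  show ?thesis by (subst integral_distr[OF meas assms(2)]) (simp add: lebesgue_integral_count_space_finite[OF assms(1)])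
qed

lemma E_sub_MF: "(E :: (nat list \<times> (real ^ 'n)) measure set) \<subseteq> MF"
proof
  fix \<mu> :: "(nat list \<times> (real ^ 'n)) measure" assume "\<mu> \<in> E"
  then obtain V x where V: "finite V" "\<mu> = distr (count_space V) IRspace (\<lambda>i. (i, x i))"
    by (rule E_repr)
  have "finite_measure (count_space V)" using V(1) by (rule finite_measure_count_space)
  then have "finite_measure \<mu>" unfolding V(2) by (rule finite_measure.finite_measure_distr) (simp add: space_IR)
  then show "\<mu> \<in> MF" unfolding MF_def V(2) by simp
qed

lemma MF_facts:
  assumes "\<mu> \<in> (MF :: (nat list \<times> (real ^ 'n)) measure set)"
  shows "finite_measure \<mu>" "sets \<mu> = sets (IRspace :: (nat list \<times> (real ^ 'n)) measure)" "space \<mu> = UNIV"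
  using assms unfolding MF_def by (auto dest: sets_eq_imp_space_eq simp: space_IR)

lemma hf_one: "hf S (\<lambda>_. 1) = indicator (S \<times> UNIV)"
  by (auto simp: hf_def fun_eq_iff)

lemma Times_sets:
  assumes "\<mu> \<in> (MF :: (nat list \<times> (real ^ 'n)) measure set)"
  shows "S \<times> (UNIV :: (real ^ 'n) set) \<in> sets \<mu>"
  using MF_facts(2)[OF assms] unfolding IRspace_def by (auto intro: pair_measureI)

lemma int_hf_one:
  assumes "\<mu> \<in> (MF :: (nat list \<times> (real ^ 'n)) measure set)"
  shows "(\<integral>p. hf S (\<lambda>_. 1) p \<partial>\<mu>) = measure \<mu> (S \<times> UNIV)"
  using MF_facts(3)[OF assms] by (simp add: hf_one)

lemma hf_meas_mu:
  fixes g :: "real ^ 'n \<Rightarrow> real"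
  assumes "\<mu> \<in> (MF :: (nat list \<times> (real ^ 'n)) measure set)" "continuous_on UNIV g"
  shows "hf S g \<in> borel_measurable \<mu>"
  using hf_meas[OF assms(2)] measurable_cong_sets[OF MF_facts(2)[OF assms(1)] refl] by blast

lemma hf_integrable:
  fixes g :: "real ^ 'n \<Rightarrow> real"
  assumes "\<mu> \<in> (MF :: (nat list \<times> (real ^ 'n)) measure set)" "continuous_on UNIV g" "\<And>x. \<bar>g x\<bar> \<le> B"
  shows "integrable \<mu> (hf S g)"
proof -
  interpret finite_measure \<mu> using MF_facts(1)[OF assms(1)] .
  show ?thesis
    by (rule integrable_const_bound[where B=B])
      (use assms in \<open>auto simp: hf_def indicator_def intro: order_trans[OF abs_ge_zero assms(3)] hf_meas_mu\<close>)
qed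

lemma dirac_lemma:
  fixes g :: "real ^ 'n \<Rightarrow> real"
  assumes mu: "\<mu> \<in> (MF :: (nat list \<times> (real ^ 'n)) measure set)" and g: "continuous_on UNIV g"
    and B: "\<And>x. \<bar>g x\<bar> \<le> B"
    and m1: "measure \<mu> ({i} \<times> UNIV) = 1"
    and eq: "(\<integral>p. hf {i} (\<lambda>v. (g v)^2) p \<partial>\<mu>) = (\<integral>p. hf {i} g p \<partial>\<mu>)^2"
  shows "AE p in \<mu>. fst p = i \<longrightarrow> g (snd p) = (\<integral>p. hf {i} g p \<partial>\<mu>)"
proof -
  define c where "c = (\<integral>p. hf {i} g p \<partial>\<mu>)"
  have g2: "continuous_on UNIV (\<lambda>v. (g v)^2)" using g by (intro continuous_intros)
  have B2: "\<bar>(g v)^2\<bar> \<le> B^2" for v using power_mono[OF B[of v] abs_ge_zero, of 2] by simp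
  have gc: "continuous_on UNIV (\<lambda>v. (g v - c)^2)" using g by (intro continuous_intros)
  have Bc: "\<bar>(g v - c)^2\<bar> \<le> (B + \<bar>c\<bar>)^2" for v
  proof -
    have "\<bar>g v - c\<bar> \<le> B + \<bar>c\<bar>" using B[of v] by linarith
    then show ?thesis using power_mono[OF _ abs_ge_zero, of "g v - c" "B + \<bar>c\<bar>" 2] by simp
  qed
  have i1: "integrable \<mu> (hf {i} g)" by (rule hf_integrable[OF mu g B])
  have i2: "integrable \<mu> (hf {i} (\<lambda>v. (g v)^2))" by (rule hf_integrable[OF mu g2 B2])
  have i3: "integrable \<mu> (hf {i} (\<lambda>_. 1))" by (rule hf_integrable[OF mu _, of _ 1]) auto
  have ic: "integrable \<mu> (hf {i} (\<lambda>v. (g v - c)^2))" by (rule hf_integrable[OF mu gc Bc])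
  have pw: "hf {i} (\<lambda>v. (g v - c)^2) p = hf {i} (\<lambda>v. (g v)^2) p - 2 * c * hf {i} g p + c^2 * hf {i} (\<lambda>_. 1) p" for p
    by (simp add: hf_def indicator_def power2_eq_square algebra_simps)
  have "(\<integral>p. hf {i} (\<lambda>v. (g v - c)^2) p \<partial>\<mu>) = 
     (\<integral>p. hf {i} (\<lambda>v. (g v)^2) p \<partial>\<mu>) - 2 * c * (\<integral>p. hf {i} g p \<partial>\<mu>) + c^2 * (\<integral>p. hf {i} (\<lambda>_. 1) p \<partial>\<mu>)"
    unfolding pw using i1 i2 i3 by simp
  also have "\<dots> = 0" using eq m1 int_hf_one[OF mu, of "{i}"] unfolding c_def[symmetric] by (simp add: power2_eq_square)
  finally have z: "(\<integral>p. hf {i} (\<lambda>v. (g v - c)^2) p \<partial>\<mu>) = 0" .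
  have nn: "AE p in \<mu>. 0 \<le> hf {i} (\<lambda>v. (g v - c)^2) p" by (simp add: hf_def)
  have "AE p in \<mu>. hf {i} (\<lambda>v. (g v - c)^2) p = 0"
    using integral_nonneg_eq_0_iff_AE[OF ic nn, THEN iffD1, OF z] .
  then show ?thesis unfolding c_def[symmetric]
    by eventually_elim (auto simp: hf_def indicator_def mem_Times_iff split: if_splits)
qed

lemma arctan_cont: "continuous_on UNIV (\<lambda>v::real^'n. arctan (v $ k))"
  by (intro continuous_intros)

lemma arctan_bd: "\<bar>arctan (v $ k)\<bar> \<le> pi"
  using arctan_bounded[of "v $ k"] pi_gt_zero by linarith

lemma conv:
  assumes mu: "\<mu> \<in> (MF :: (nat list \<times> (real ^ 'n)) measure set)"
    and c1: "\<And>i. (\<integral>p. hf {i} (\<lambda>_. 1) p \<partial>\<mu>) \<in> {0,1}"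
    and c2: "\<And>i j. word_prec i j \<Longrightarrow> (\<integral>p. hf {i,j} (\<lambda>_. 1) p \<partial>\<mu>) \<in> {0,1}"
    and c4: "\<And>i k. (\<integral>p. hf {i} (\<lambda>v. (arctan (v $ k))^2) p \<partial>\<mu>) = (\<integral>p. hf {i} (\<lambda>v. arctan (v $ k)) p \<partial>\<mu>)^2"
  shows "\<mu> \<in> E"
proof -
  interpret finite_measure \<mu> using MF_facts(1)[OF mu] .
  have sp: "space \<mu> = UNIV" by (rule MF_facts(3)[OF mu])
  have st: "sets \<mu> = sets (IRspace :: (nat list \<times> (real ^ 'n)) measure)" by (rule MF_facts(2)[OF mu])
  have TS: "S \<times> UNIV \<in> sets \<mu>" for S by (rule Times_sets[OF mu])
  have m01: "measure \<mu> ({i} \<times> UNIV) \<in> {0,1}" for i using c1[of i] int_hf_one[OF mu] by simp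
  define W where "W = {i. measure \<mu> ({i} \<times> UNIV) = 1}"
  have mF: "measure \<mu> (F \<times> UNIV) = (\<Sum>i\<in>F. measure \<mu> ({i} \<times> UNIV))" if "finite F" for F
  proof -
    have "F \<times> (UNIV :: (real^'n) set) = (\<Union>i\<in>F. {i} \<times> UNIV)" by auto
    moreover have "measure \<mu> (\<Union>i\<in>F. {i} \<times> (UNIV :: (real^'n) set)) = (\<Sum>i\<in>F. measure \<mu> ({i} \<times> UNIV))"
      using that TS by (intro finite_measure_finite_Union) (auto simp: disjoint_family_on_def)
    ultimately show ?thesis by (simp only:)
  qed
  have finW: "finite W"
  proof (rule ccontr)
    assume "\<not> finite W"
    then obtain F where F: "finite F" "card F = nat \<lceil>measure \<mu> (space \<mu>)\<rceil> + 1" "F \<subseteq> W"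
      using infinite_arbitrarily_large by blast
    have "measure \<mu> (F \<times> UNIV) = real (card F)" using mF[OF F(1)] F(3) by (simp add: W_def subset_eq)
    moreover have "measure \<mu> (F \<times> UNIV) \<le> measure \<mu> (space \<mu>)" by (rule bounded_measure)
    moreover have "measure \<mu> (space \<mu>) < real (nat \<lceil>measure \<mu> (space \<mu>)\<rceil> + 1)"
      by linarith
    ultimately show False using F(2) by simp
  qed
  have anti: "\<forall>i\<in>W. \<forall>j\<in>W. \<not> word_prec i j"
  proof (intro ballI notI)
    fix i j assume ij: "i \<in> W" "j \<in> W" "word_prec i j"
    have "i \<noteq> j" using ij(3) by (auto simp: word_prec_def)
    then have "measure \<mu> ({i,j} \<times> UNIV) = 2" using mF[of "{i,j}"] ij(1,2) by (simp add: W_def)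
    then show False using c2[OF ij(3)] int_hf_one[OF mu, of "{i,j}"] by simp
  qed
  define b where "b i k = (\<integral>p. hf {i} (\<lambda>v. arctan (v $ k)) p \<partial>\<mu>)" for i k
  have AEi: "AE p in \<mu>. fst p = i \<longrightarrow> (\<forall>k. arctan (snd p $ k) = b i k)" if "i \<in> W" for i
  proof -
    have "AE p in \<mu>. \<forall>k\<in>UNIV. fst p = i \<longrightarrow> arctan (snd p $ k) = b i k"
    proof (rule AE_finite_allI)
      fix k :: 'n
      show "AE p in \<mu>. fst p = i \<longrightarrow> arctan (snd p $ k) = b i k"
        unfolding b_def using dirac_lemma[OF mu arctan_cont arctan_bd _ c4[of i k]] that by (simp add: W_def)
    qed simp
    then show ?thesis by auto
  qed
  define x where "x i = (SOME v. \<forall>k. arctan (v $ k) = b i k)" for i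
  have xprop: "\<forall>k. arctan (x i $ k) = b i k" if "i \<in> W" for i
  proof -
    have "\<exists>v. \<forall>k. arctan (v $ k) = b i k"
    proof (rule ccontr)
      assume nv: "\<nexists>v. \<forall>k. arctan (v $ k) = b i k"
      from AEi[OF that] have "AE p in \<mu>. \<not> (p \<in> {i} \<times> UNIV)"
        by eventually_elim (use nv in \<open>auto simp: mem_Times_iff\<close>)
      then have "emeasure \<mu> {p \<in> space \<mu>. p \<in> {i} \<times> UNIV} = 0" by (rule emeasure_eq_0_AE)
      then have "measure \<mu> ({i} \<times> UNIV) = 0" using sp by (simp add: measure_def)
      then show False using that by (simp add: W_def)
    qed
    then show ?thesis unfolding x_def by (rule someI_ex)
  qed
  have AEx: "AE p in \<mu>. fst p = i \<longrightarrow> snd p = x i" if "i \<in> W" for i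
    using AEi[OF that]
    by eventually_elim (use xprop[OF that] in \<open>metis vec_eq_iff arctan_eq_iff\<close>)
  have AEn: "AE p in \<mu>. fst p \<noteq> i" if "i \<notin> W" for i
  proof -
    have "measure \<mu> ({i} \<times> UNIV) = 0" using m01[of i] that by (auto simp: W_def)
    then have "{i} \<times> UNIV \<in> null_sets \<mu>" using TS by (simp add: emeasure_eq_measure null_sets_def)
    from AE_not_in[OF this] show ?thesis by (auto elim: AE_mp)
  qed
  define P where "P = (\<lambda>i. (i, x i)) ` W"
  have AEP: "AE p in \<mu>. p \<in> P"
  proof -
    have "AE p in \<mu>. \<forall>i. (i \<in> W \<longrightarrow> (fst p = i \<longrightarrow> snd p = x i)) \<and> (i \<notin> W \<longrightarrow> fst p \<noteq> i)"
      unfolding AE_all_countable using AEx AEn by auto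
    then show ?thesis
    proof eventually_elim
      case (elim p)
      then have "fst p \<in> W" "snd p = x (fst p)" by blast+
      then show ?case unfolding P_def by (intro image_eqI[of _ _ "fst p"]) (auto simp: prod_eq_iff)
    qed
  qed
  have sing: "{q} \<in> sets \<mu>" for q
  proof -
    have "{fst q} \<times> {snd q} \<in> sets (IRspace :: (nat list \<times> (real ^ 'n)) measure)"
      unfolding IRspace_def by (intro pair_measureI) auto
    then show ?thesis using st by simp
  qed
  have Psets: "P \<in> sets \<mu>"
  proof -
    have "P = (\<Union>q\<in>P. {q})" by auto
    also have "\<dots> \<in> sets \<mu>" using finW sing unfolding P_def by (intro sets.finite_UN) auto
    finally show ?thesis .
  qed
  have em1: "emeasure \<mu> {(i, x i)} = 1" if "i \<in> W" for i
  proof -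
    have "emeasure \<mu> {(i, x i)} = emeasure \<mu> ({i} \<times> UNIV)"
      by (rule emeasure_eq_AE) (use AEx[OF that] sing TS in \<open>auto elim!: AE_mp\<close>)
    also have "\<dots> = 1" using that TS by (simp add: W_def emeasure_eq_measure)
    finally show ?thesis .
  qed
  show ?thesis unfolding E_def
  proof (intro CollectI exI conjI ballI)
    show "finite W" "sets \<mu> = sets IRspace" by (fact finW, fact st)
    show "\<And>i j. i \<in> W \<Longrightarrow> j \<in> W \<Longrightarrow> \<not> word_prec i j" using anti by blast
  next
    fix A assume A: "A \<in> sets \<mu>"
    have "emeasure \<mu> A = emeasure \<mu> (A \<inter> P)"
      by (rule emeasure_eq_AE) (use AEP A Psets in \<open>auto elim!: AE_mp\<close>)
    also have "\<dots> = (\<Sum>q\<in>A \<inter> P. emeasure \<mu> {q})"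
      using finW sing unfolding P_def by (intro emeasure_eq_sum_singleton) auto
    also have "\<dots> = (\<Sum>q\<in>A \<inter> P. 1)"
      by (intro sum.cong refl) (auto simp: P_def em1)
    also have "\<dots> = of_nat (card (A \<inter> P))" by simp
    also have "A \<inter> P = (\<lambda>i. (i, x i)) ` {i \<in> W. (i, x i) \<in> A}" unfolding P_def by auto
    also have "card \<dots> = card {i \<in> W. (i, x i) \<in> A}" by (rule card_image) (auto simp: inj_on_def)
    finally show "emeasure \<mu> A = of_nat (card {i \<in> W. (i, x i) \<in> A})" .
  qed
qed

lemma top_MF: "topspace (weak_top :: (nat list \<times> (real ^ 'n)) measure topology) = MF"
  unfolding weak_top_def topology_generated_by_topspace
proof (intro equalityI subsetI)
  fix \<nu> :: "(nat list \<times> (real ^ 'n)) measure" assume "\<nu> \<in> MF"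
  moreover have "bcont (\<lambda>_::nat list \<times> (real ^ 'n). 0::real)" unfolding bcont_def by auto
  ultimately show "\<nu> \<in> \<Union> {{\<nu> \<in> MF. (\<integral>x. f x \<partial>\<nu>) \<in> U} | f U. bcont f \<and> open U}"
    by (intro UnionI[of "{\<nu> \<in> MF. (\<integral>x. (\<lambda>_. 0::real) x \<partial>\<nu>) \<in> UNIV}"]) blast+
qed auto

lemma E_hf:
  fixes x :: "nat list \<Rightarrow> real ^ 'n" and g :: "real ^ 'n \<Rightarrow> real"
  assumes "finite V" "continuous_on UNIV g"
  shows "(\<integral>p. hf S g p \<partial>distr (count_space V) IRspace (\<lambda>i. (i, x i))) = (\<Sum>i\<in>V \<inter> S. g (x i))"
  by (subst E_int[OF assms(1) hf_meas[OF assms(2)]]) (auto simp: sum.inter_restrict[OF assms(1)] hf_def indicator_def intro!: sum.cong)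

lemma cont1: "continuous_map (weak_top :: (nat list \<times> (real ^ 'n)) measure topology) euclideanreal
     (\<lambda>\<nu>. \<integral>p. hf S (\<lambda>_::real^'n. 1) p \<partial>\<nu>)"
  by (rule cont_int, rule bcont_hf[where B=1]) auto

lemma cont2: "continuous_map (weak_top :: (nat list \<times> (real ^ 'n)) measure topology) euclideanreal
     (\<lambda>\<nu>. \<integral>p. hf S (\<lambda>v::real^'n. arctan (v $ k)) p \<partial>\<nu>)"
  by (rule cont_int, rule bcont_hf[OF arctan_cont arctan_bd])

lemma cont3: "continuous_map (weak_top :: (nat list \<times> (real ^ 'n)) measure topology) euclideanreal
     (\<lambda>\<nu>. \<integral>p. hf S (\<lambda>v::real^'n. (arctan (v $ k))^2) p \<partial>\<nu>)"
proof (rule cont_int, rule bcont_hf[where B="pi^2"])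
  show "continuous_on UNIV (\<lambda>v::real^'n. (arctan (v $ k))^2)" by (intro continuous_intros)
  show "\<bar>(arctan (v $ k))^2\<bar> \<le> pi^2" for v :: "real^'n"
    using power_mono[OF arctan_bd[of v k] abs_ge_zero, of 2] by simp
qed

theorem propositionA1:
  shows "closedin (weak_top :: (nat list \<times> (real ^ 'n)) measure topology) (E :: (nat list \<times> (real ^ 'n)) measure set)"
proof -
  let ?T = "weak_top :: (nat list \<times> (real ^ 'n)) measure topology"
  define K1 where "K1 = range (\<lambda>i. {\<mu> \<in> topspace ?T. (\<integral>p. hf {i} (\<lambda>_::real^'n. 1) p \<partial>\<mu>) \<in> {0,1}})"
  define K2 where "K2 = range (\<lambda>(i,j). {\<mu> \<in> topspace ?T. (\<integral>p. hf {i,j} (\<lambda>_::real^'n. 1) p \<partial>\<mu>)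
      \<in> (if word_prec i j then {0,1} else UNIV)})"
  define K4 where "K4 = range (\<lambda>(i,k). {\<mu> \<in> topspace ?T.
      (\<integral>p. hf {i} (\<lambda>v::real^'n. (arctan (v $ k))^2) p \<partial>\<mu>)
      - (\<integral>p. hf {i} (\<lambda>v::real^'n. arctan (v $ k)) p \<partial>\<mu>) * (\<integral>p. hf {i} (\<lambda>v::real^'n. arctan (v $ k)) p \<partial>\<mu>) \<in> {0}})"
  have cl: "closedin ?T (\<Inter>(K1 \<union> K2 \<union> K4))"
  proof (rule closedin_Inter)
    show "K1 \<union> K2 \<union> K4 \<noteq> {}" unfolding K1_def by auto
  next
    fix S assume "S \<in> K1 \<union> K2 \<union> K4"
    then consider (a) i where "S = {\<mu> \<in> topspace ?T. (\<integral>p. hf {i} (\<lambda>_::real^'n. 1) p \<partial>\<mu>) \<in> {0,1}}"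
      | (b) i j where "S = {\<mu> \<in> topspace ?T. (\<integral>p. hf {i,j} (\<lambda>_::real^'n. 1) p \<partial>\<mu>)
          \<in> (if word_prec i j then {0,1} else UNIV)}"
      | (c) i k where "S = {\<mu> \<in> topspace ?T.
      (\<integral>p. hf {i} (\<lambda>v::real^'n. (arctan (v $ k))^2) p \<partial>\<mu>)
      - (\<integral>p. hf {i} (\<lambda>v::real^'n. arctan (v $ k)) p \<partial>\<mu>) * (\<integral>p. hf {i} (\<lambda>v::real^'n. arctan (v $ k)) p \<partial>\<mu>) \<in> {0}}"
      unfolding K1_def K2_def K4_def by auto
    then show "closedin ?T S"
    proof cases
      case a
      show ?thesis unfolding a by (rule closedin_continuous_map_preimage[OF cont1]) (simp add: closed_closedin[symmetric])
    next
      case b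
      show ?thesis unfolding b by (rule closedin_continuous_map_preimage[OF cont1]) (simp add: closed_closedin[symmetric])
    next
      case c
      show ?thesis unfolding c
        by (rule closedin_continuous_map_preimage[where Y=euclideanreal])
          (intro continuous_map_diff continuous_map_real_mult cont2 cont3, simp add: closed_closedin[symmetric])
    qed
  qed
  have "E = \<Inter>(K1 \<union> K2 \<union> K4)"
  proof (intro equalityI subsetI)
    fix \<mu> :: "(nat list \<times> (real ^ 'n)) measure" assume muE: "\<mu> \<in> E"
    then have muT: "\<mu> \<in> topspace ?T" using E_sub_MF top_MF by blast
    obtain V x where V: "finite V" "\<forall>i\<in>V. \<forall>j\<in>V. \<not> word_prec i j"
      "\<mu> = distr (count_space V) IRspace (\<lambda>i. (i, x i))" using muE by (rule E_repr)
    have int: "(\<integral>p. hf S g p \<partial>\<mu>) = (\<Sum>i\<in>V \<inter> S. g (x i))" if "continuous_on UNIV g" for S g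
      unfolding V(3) by (rule E_hf[OF V(1) that])
    have sing: "V \<inter> {i} = {} \<or> V \<inter> {i} = {i}" for i by auto
    show "\<mu> \<in> \<Inter>(K1 \<union> K2 \<union> K4)"
    proof (intro InterI)
      fix S assume "S \<in> K1 \<union> K2 \<union> K4"
      then consider (a) i where "S = {\<mu> \<in> topspace ?T. (\<integral>p. hf {i} (\<lambda>_::real^'n. 1) p \<partial>\<mu>) \<in> {0,1}}"
        | (b) i j where "S = {\<mu> \<in> topspace ?T. (\<integral>p. hf {i,j} (\<lambda>_::real^'n. 1) p \<partial>\<mu>)
            \<in> (if word_prec i j then {0,1} else UNIV)}"
        | (c) i k where "S = {\<mu> \<in> topspace ?T.
        (\<integral>p. hf {i} (\<lambda>v::real^'n. (arctan (v $ k))^2) p \<partial>\<mu>)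
        - (\<integral>p. hf {i} (\<lambda>v::real^'n. arctan (v $ k)) p \<partial>\<mu>) * (\<integral>p. hf {i} (\<lambda>v::real^'n. arctan (v $ k)) p \<partial>\<mu>) \<in> {0}}"
        unfolding K1_def K2_def K4_def by auto
      then show "\<mu> \<in> S"
      proof cases
        case a
        show ?thesis unfolding a using muT int[of "\<lambda>_. 1" "{i}"] sing[of i] by auto
      next
        case b
        have disj: "V \<inter> {i,j} = {} \<or> V \<inter> {i,j} = {i} \<or> V \<inter> {i,j} = {j}" if "word_prec i j"
          using V(2) that by (cases "i \<in> V"; cases "j \<in> V") auto
        have c01: "real (card (V \<inter> {i,j})) \<in> {0,1}" if wp: "word_prec i j"
        proof -
          from disj[OF wp] show ?thesis by (elim disjE) simp_all
        qed
        have "real (card (V \<inter> {i,j})) \<in> (if word_prec i j then {0,1} else UNIV)"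
          using c01 by simp
        moreover have "(\<integral>p. hf {i,j} (\<lambda>_::real^'n. 1) p \<partial>\<mu>) = real (card (V \<inter> {i,j}))"
          using int[of "\<lambda>_. 1" "{i,j}"] by simp
        ultimately show ?thesis unfolding b using muT by simp
      next
        case c
        have cc: "continuous_on UNIV (\<lambda>v::real^'n. (arctan (v $ k))^2)" by (intro continuous_intros)
        have e1: "(\<integral>p. hf {i} (\<lambda>v::real^'n. (arctan (v $ k))^2) p \<partial>\<mu>) = (\<Sum>l\<in>V \<inter> {i}. (arctan (x l $ k))^2)"
          by (rule int[OF cc])
        have e2: "(\<integral>p. hf {i} (\<lambda>v::real^'n. arctan (v $ k)) p \<partial>\<mu>) = (\<Sum>l\<in>V \<inter> {i}. arctan (x l $ k))"
          by (rule int[OF arctan_cont])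
        have "(\<Sum>l\<in>V \<inter> {i}. (arctan (x l $ k))^2) - (\<Sum>l\<in>V \<inter> {i}. arctan (x l $ k)) * (\<Sum>l\<in>V \<inter> {i}. arctan (x l $ k)) = 0"
          using sing[of i] by (elim disjE) (simp_all add: power2_eq_square)
        then show ?thesis unfolding c using muT e1 e2 by simp
      qed
    qed
  next
    fix \<mu> :: "(nat list \<times> (real ^ 'n)) measure" assume mu: "\<mu> \<in> \<Inter>(K1 \<union> K2 \<union> K4)"
    have K1: "\<mu> \<in> S" if "S \<in> K1" for S using mu that by blast
    have K2: "\<mu> \<in> S" if "S \<in> K2" for S using mu that by blast
    have K4: "\<mu> \<in> S" if "S \<in> K4" for S using mu that by blast
    have muMF: "\<mu> \<in> MF" using K1[of "{\<mu> \<in> topspace ?T. (\<integral>p. hf {[]} (\<lambda>_::real^'n. 1) p \<partial>\<mu>) \<in> {0,1}}"]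
      unfolding K1_def top_MF by auto
    show "\<mu> \<in> E"
    proof (rule conv[OF muMF])
      show "(\<integral>p. hf {i} (\<lambda>_. 1) p \<partial>\<mu>) \<in> {0,1}" for i
        using K1[of "{\<mu> \<in> topspace ?T. (\<integral>p. hf {i} (\<lambda>_::real^'n. 1) p \<partial>\<mu>) \<in> {0,1}}"]
        unfolding K1_def by auto
      show "(\<integral>p. hf {i,j} (\<lambda>_. 1) p \<partial>\<mu>) \<in> {0,1}" if wp: "word_prec i j" for i j
      proof -
        have "{\<mu> \<in> topspace ?T. (\<integral>p. hf {i,j} (\<lambda>_::real^'n. 1) p \<partial>\<mu>)
            \<in> (if word_prec i j then {0,1} else UNIV)} \<in> K2"
          unfolding K2_def by (rule image_eqI[of _ _ "(i,j)"]) simp_all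
        from K2[OF this] wp show ?thesis by simp
      qed
      show "(\<integral>p. hf {i} (\<lambda>v. (arctan (v $ k))^2) p \<partial>\<mu>) = (\<integral>p. hf {i} (\<lambda>v. arctan (v $ k)) p \<partial>\<mu>)^2" for i k
      proof -
        have "{\<mu> \<in> topspace ?T.
        (\<integral>p. hf {i} (\<lambda>v::real^'n. (arctan (v $ k))^2) p \<partial>\<mu>)
        - (\<integral>p. hf {i} (\<lambda>v::real^'n. arctan (v $ k)) p \<partial>\<mu>) * (\<integral>p. hf {i} (\<lambda>v::real^'n. arctan (v $ k)) p \<partial>\<mu>) \<in> {0}} \<in> K4"
          unfolding K4_def by (rule image_eqI[of _ _ "(i,k)"]) simp_all
        from K4[OF this] show ?thesis by (simp add: power2_eq_square)
      qed
    qed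
  qed
  with cl show ?thesis by simp
qed

end
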